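(* Let $N_1,N_3,J\in\mathbb{N}$ and let $\hat{\mathcal{X}}\in\mathbb{R}^{N_1\times J\times N_3}$ be a real third-order tensor with frontal slices $\hat{\mathcal{X}}_j\in\mathbb{R}^{N_1\times N_3}$ ($j=1,\dots,J$), where $(\hat{\mathcal{X}}_j)_{ik}=\hat{\mathcal{X}}_{ijk}$. Consider all factorizations of the form $\hat{\mathcal{X}}_j=\mathbf{U}\mathbf{R}_j\mathbf{V}^\top$ for all $j=1,\dots,J$, where $D\in\mathbb{N}$ is arbitrary, $\mathbf{U}\in\mathbb{R}^{N_1\times D}$, $\mathbf{V}\in\mathbb{R}^{N_3\times D}$, and each $\mathbf{R}_j\in\mathbb{R}^{D\times D}$ is a real diagonal matrix. Then $$\min_{\substack{D,\ \mathbf{U},\mathbf{V},\mathbf{R}_1,\dots,\mathbf{R}_J:\\ \hat{\mathcal{X}}_j=\mathbf{U}\mathbf{R}_j\mathbf{V}^\top\ \forall j}}\ \frac{1}{4\sqrt{J}}\sum_{j=1}^{J}\Big(\|\mathbf{U}\mathbf{R}_j\|_F^2+\|\mathbf{V}\|_F^2+\|\mathbf{V}\mathbf{R}_j^\top\|_F^2+\|\mathbf{U}\|_F^2\Big)=\|\hat{\mathcal{X}}\|_*.$$ Moreover, every factorization attaining this minimum satisfies, for every $d\in\{1,\dots,D\}$, $$\|\mathbf{u}_{:d}\|_2\|\mathbf{r}_{:d}\|_2=\sqrt{J}\,\|\mathbf{v}_{:d}\|_2\quad\text{and}\quad \|\mathbf{v}_{:d}\|_2\|\mathbf{r}_{:d}\|_2=\sqrt{J}\,\|\mathbf{u}_{:d}\|_2,$$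 where $\mathbf{u}_{:d}$, $\mathbf{v}_{:d}$ are the $d$-th columns of $\mathbf{U}$, $\mathbf{V}$, and $\mathbf{r}_{:d}\in\mathbb{R}^J$ is the $d$-th column of the matrix $\widetilde{\mathbf{R}}\in\mathbb{R}^{J\times D}$ defined by $\widetilde{\mathbf{R}}(j,d)=\mathbf{R}_j(d,d)$.
   Context: $\|\cdot\|_F$ is the Frobenius norm and $\|\cdot\|_2$ the Euclidean norm. The tensor nuclear 2-norm of a real tensor $\mathcal{A}\in\mathbb{R}^{n_1}\otimes\mathbb{R}^{n_2}\otimes\mathbb{R}^{n_3}$ is $\|\mathcal{A}\|_*=\min\big\{\sum_{i=1}^r\|\mathbf{a}_{1,i}\|_2\|\mathbf{a}_{2,i}\|_2\|\mathbf{a}_{3,i}\|_2:\ \mathcal{A}=\sum_{i=1}^r\mathbf{a}_{1,i}\otimes\mathbf{a}_{2,i}\otimes\mathbf{a}_{3,i},\ r\in\mathbb{N},\ \mathbf{a}_{k,i}\in\mathbb{R}^{n_k}\big\}$, where $\otimes$ is the outer product. Note that $\hat{\mathcal{X}}_j=\mathbf{U}\mathbf{R}_j\mathbf{V}^\top$ for all $j$ is equivalent to $\hat{\mathcal{X}}=\sum_{d=1}^D\mathbf{u}_{:d}\otimes\mathbf{r}_{:d}\otimes\mathbf{v}_{:d}$. *)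

theory Defs
  imports Complex_Main
begin

(* Matrices of size m x n are represented as functions nat => nat => real,
   only entries with indices i < m, k < n are meaningful.
   Vectors of length n are functions nat => real, only entries < n matter. *)

definition mat_mul :: "nat \<Rightarrow> (nat \<Rightarrow> nat \<Rightarrow> real) \<Rightarrow> (nat \<Rightarrow> nat \<Rightarrow> real) \<Rightarrow> (nat \<Rightarrow> nat \<Rightarrow> real)" where
  "mat_mul n A B = (\<lambda>i k. \<Sum>l<n. A i l * B l k)"

definition diag_mat :: "(nat \<Rightarrow> real) \<Rightarrow> (nat \<Rightarrow> nat \<Rightarrow> real)" where
  "diag_mat r = (\<lambda>i k. if i = k then r i else 0)"

definition transp_mat :: "(nat \<Rightarrow> nat \<Rightarrow> real) \<Rightarrow> (nat \<Rightarrow> nat \<Rightarrow> real)" where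
  "transp_mat A = (\<lambda>i k. A k i)"

definition frob_sq :: "nat \<Rightarrow> nat \<Rightarrow> (nat \<Rightarrow> nat \<Rightarrow> real) \<Rightarrow> real" where
  "frob_sq m n A = (\<Sum>i<m. \<Sum>k<n. (A i k)\<^sup>2)"

definition vnorm :: "nat \<Rightarrow> (nat \<Rightarrow> real) \<Rightarrow> real" where
  "vnorm n x = sqrt (\<Sum>p<n. (x p)\<^sup>2)"

text \<open>Tensor nuclear 2-norm: infimum (the paper's min) of
  sum_i ||a1_i|| ||a2_i|| ||a3_i|| over all decompositions
  A = sum_{i<r} a1_i (x) a2_i (x) a3_i.\<close>
definition tensor_nuclear_norm ::
  "nat \<Rightarrow> nat \<Rightarrow> nat \<Rightarrow> (nat \<Rightarrow> nat \<Rightarrow> nat \<Rightarrow> real) \<Rightarrow> real" where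
  "tensor_nuclear_norm n1 n2 n3 A = Inf
     {(\<Sum>i<r. vnorm n1 (a1 i) * vnorm n2 (a2 i) * vnorm n3 (a3 i)) | (r::nat) (a1::nat\<Rightarrow>nat\<Rightarrow>real) (a2::nat\<Rightarrow>nat\<Rightarrow>real) (a3::nat\<Rightarrow>nat\<Rightarrow>real).
        \<forall>p<n1. \<forall>q<n2. \<forall>s<n3. A p q s = (\<Sum>i<r. a1 i p * a2 i q * a3 i s)}"

text \<open>Factorization X_j = U R_j V^T for all j < J, where R_j = diag (R j),
  i.e. R j d is the (d,d) entry of R_j (= tilde R (j,d)).
  X i j k is the (i,j,k) entry of the N1 x J x N3 tensor.\<close>
definition is_factorization ::
  "nat \<Rightarrow> nat \<Rightarrow> nat \<Rightarrow> (nat \<Rightarrow> nat \<Rightarrow> nat \<Rightarrow> real) \<Rightarrow> nat \<Rightarrow>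
   (nat \<Rightarrow> nat \<Rightarrow> real) \<Rightarrow> (nat \<Rightarrow> nat \<Rightarrow> real) \<Rightarrow> (nat \<Rightarrow> nat \<Rightarrow> real) \<Rightarrow> bool" where
  "is_factorization N1 J N3 X D U V R \<longleftrightarrow>
     (\<forall>j<J. \<forall>i<N1. \<forall>k<N3.
        X i j k = mat_mul D (mat_mul D U (diag_mat (R j))) (transp_mat V) i k)"

definition fact_objective ::
  "nat \<Rightarrow> nat \<Rightarrow> nat \<Rightarrow> nat \<Rightarrow>
   (nat \<Rightarrow> nat \<Rightarrow> real) \<Rightarrow> (nat \<Rightarrow> nat \<Rightarrow> real) \<Rightarrow> (nat \<Rightarrow> nat \<Rightarrow> real) \<Rightarrow> real" where
  "fact_objective N1 J N3 D U V R =
     1 / (4 * sqrt (real J)) *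
     (\<Sum>j<J. frob_sq N1 D (mat_mul D U (diag_mat (R j))) + frob_sq N3 D V
            + frob_sq N3 D (mat_mul D V (transp_mat (diag_mat (R j)))) + frob_sq N1 D U)"

end

theory Submission
  imports Defs "HOL-Analysis.Analysis"
begin


lemma vnorm_nonneg: "vnorm n x \<ge> 0"
  unfolding vnorm_def by (simp add: sum_nonneg)

lemma vnorm_sq: "(vnorm n x)^2 = (\<Sum>p<n. (x p)^2)"
  unfolding vnorm_def by (simp add: sum_nonneg)

lemma vnorm_scale: "vnorm n (\<lambda>p. c * x p) = \<bar>c\<bar> * vnorm n x"
proof -
  have "(\<Sum>p<n. (c * x p)^2) = c^2 * (\<Sum>p<n. (x p)^2)"
    by (simp add: power_mult_distrib sum_distrib_left)
  thus ?thesis unfolding vnorm_def by (simp add: real_sqrt_mult)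
qed

lemma vnorm_zero_fun[simp]: "vnorm n (\<lambda>p. 0) = 0"
  unfolding vnorm_def by simp

lemma vnorm_zero_dim[simp]: "vnorm 0 x = 0"
  unfolding vnorm_def by simp

lemma vnorm_cong: "(\<And>p. p < n \<Longrightarrow> x p = y p) \<Longrightarrow> vnorm n x = vnorm n y"
  unfolding vnorm_def by (intro arg_cong[where f=sqrt] sum.cong) auto

lemma vnorm_eq0: assumes "vnorm n x = 0" "p < n" shows "x p = 0"
proof -
  have "(\<Sum>p<n. (x p)^2) = 0" using assms(1) unfolding vnorm_def by (simp add: sum_nonneg)
  hence "\<forall>p\<in>{..<n}. (x p)^2 = 0" by (subst sum_nonneg_eq_0_iff[symmetric]) auto
  thus ?thesis using assms(2) by simp
qed

lemma vnorm_ge_abs: assumes "p < n" shows "\<bar>x p\<bar> \<le> vnorm n x"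
proof -
  have "(x p)^2 \<le> (\<Sum>p<n. (x p)^2)"
    using assms by (intro member_le_sum) auto
  hence "sqrt ((x p)^2) \<le> vnorm n x" unfolding vnorm_def using real_sqrt_le_mono by blast
  thus ?thesis by simp
qed

lemma rescale:
  fixes x y z :: "nat \<Rightarrow> real"
  assumes "tx \<ge> 0" "ty \<ge> 0" "tz \<ge> 0"
    and P: "tx*ty*tz = vnorm n1 x * vnorm n2 y * vnorm n3 z"
    and Z: "vnorm n1 x * vnorm n2 y * vnorm n3 z = 0 \<Longrightarrow> tx = 0 \<and> ty = 0 \<and> tz = 0"
  shows "\<exists>x' y' z'. vnorm n1 x' = tx \<and> vnorm n2 y' = ty \<and> vnorm n3 z' = tz \<and>
     (\<forall>p<n1. \<forall>q<n2. \<forall>s<n3. x' p * y' q * z' s = x p * y q * z s)"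
proof (cases "vnorm n1 x * vnorm n2 y * vnorm n3 z = 0")
  case True
  have "\<forall>p<n1. \<forall>q<n2. \<forall>s<n3. x p * y q * z s = 0"
    using True vnorm_eq0[of n1 x] vnorm_eq0[of n2 y] vnorm_eq0[of n3 z] by auto
  thus ?thesis using Z True by (intro exI[of _ "\<lambda>_. 0"]) auto
next
  case False
  hence nz: "vnorm n1 x \<noteq> 0" "vnorm n2 y \<noteq> 0" "vnorm n3 z \<noteq> 0" by auto
  have pos: "vnorm n1 x > 0" "vnorm n2 y > 0" "vnorm n3 z > 0"
    using nz vnorm_nonneg[of n1 x] vnorm_nonneg[of n2 y] vnorm_nonneg[of n3 z] by auto
  define a where "a = tx / vnorm n1 x"
  define b where "b = ty / vnorm n2 y"
  define c where "c = tz / vnorm n3 z"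
  have abc: "a*b*c = 1" unfolding a_def b_def c_def using P False by (simp add: field_simps)
  have 1: "vnorm n1 (\<lambda>p. a * x p) = tx" unfolding vnorm_scale a_def using pos assms by simp
  have 2: "vnorm n2 (\<lambda>p. b * y p) = ty" unfolding vnorm_scale b_def using pos assms by simp
  have 3: "vnorm n3 (\<lambda>p. c * z p) = tz" unfolding vnorm_scale c_def using pos assms by simp
  have 4: "a * x p * (b * y q) * (c * z s) = x p * y q * z s" for p q s
  proof -
    have "a * x p * (b * y q) * (c * z s) = (a*b*c) * (x p * y q * z s)" by (simp add: algebra_simps)
    thus ?thesis using abc by simp
  qed
  show ?thesis using 1 2 3 4 by blast
qed

lemma dep:
  fixes v :: "'i \<Rightarrow> 'k \<Rightarrow> real"
  assumes "finite K" "finite I" "card K < card I"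
  shows "\<exists>g. (\<forall>k\<in>K. (\<Sum>i\<in>I. g i * v i k) = 0) \<and> (\<exists>i\<in>I. g i \<noteq> 0)"
  using assms
proof (induction K arbitrary: I v rule: finite_induct)
  case empty
  then obtain i where "i \<in> I" by fastforce
  thus ?case by (intro exI[of _ "\<lambda>i'. if i' = i then 1 else 0"]) auto
next
  case (insert x K)
  show ?case
  proof (cases "\<forall>i\<in>I. v i x = 0")
    case True
    from insert.IH[of I v] insert.prems insert.hyps obtain g where
      g: "\<forall>k\<in>K. (\<Sum>i\<in>I. g i * v i k) = 0" "\<exists>i\<in>I. g i \<noteq> 0" by auto
    thus ?thesis using True by (intro exI[of _ g]) auto
  next
    case False
    then obtain j where j: "j \<in> I" "v j x \<noteq> 0" by auto
    define w where "w i k = v i k - v i x / v j x * v j k" for i k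
    have "card (I - {j}) = card I - 1" using j insert.prems by simp
    hence "card K < card (I - {j})" using insert.prems insert.hyps by simp
    from insert.IH[of "I - {j}" w, OF _ this] insert.prems obtain g' where
      g': "\<forall>k\<in>K. (\<Sum>i\<in>I-{j}. g' i * w i k) = 0" "\<exists>i\<in>I-{j}. g' i \<noteq> 0" by auto
    define g where "g i = (if i = j then - (\<Sum>i\<in>I-{j}. g' i * v i x) / v j x else g' i)" for i
    have key: "(\<Sum>i\<in>I. g i * v i k) = (\<Sum>i\<in>I-{j}. g' i * w i k)" for k
    proof -
      have "(\<Sum>i\<in>I. g i * v i k) = g j * v j k + (\<Sum>i\<in>I-{j}. g i * v i k)"
        using j insert.prems by (simp add: sum.remove)
      also have "(\<Sum>i\<in>I-{j}. g i * v i k) = (\<Sum>i\<in>I-{j}. g' i * v i k)"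
        unfolding g_def by (intro sum.cong) auto
      also have "(\<Sum>i\<in>I-{j}. g' i * w i k) = (\<Sum>i\<in>I-{j}. g' i * v i k)
          - (\<Sum>i\<in>I-{j}. g' i * v i x) / v j x * v j k"
        unfolding w_def by (simp add: algebra_simps sum_subtractf sum_distrib_left sum_distrib_right sum_divide_distrib)
      ultimately show ?thesis unfolding g_def by simp
    qed
    show ?thesis
    proof (intro exI[of _ g] conjI)
      show "\<forall>k\<in>insert x K. (\<Sum>i\<in>I. g i * v i k) = 0"
        using g'(1) j(2) by (auto simp: key w_def)
      show "\<exists>i\<in>I. g i \<noteq> 0" using g'(2) unfolding g_def by auto
    qed
  qed
qed

definition dcmp :: "nat \<Rightarrow> nat \<Rightarrow> nat \<Rightarrow> (nat\<Rightarrow>nat\<Rightarrow>nat\<Rightarrow>real) \<Rightarrow> 'i set \<Rightarrow>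
   ('i\<Rightarrow>nat\<Rightarrow>real) \<Rightarrow> ('i\<Rightarrow>nat\<Rightarrow>real) \<Rightarrow> ('i\<Rightarrow>nat\<Rightarrow>real) \<Rightarrow> bool" where
  "dcmp n1 n2 n3 A I a b c \<longleftrightarrow> (\<forall>p<n1. \<forall>q<n2. \<forall>s<n3. A p q s = (\<Sum>i\<in>I. a i p * b i q * c i s))"

definition dcost :: "nat \<Rightarrow> nat \<Rightarrow> nat \<Rightarrow> 'i set \<Rightarrow>
   ('i\<Rightarrow>nat\<Rightarrow>real) \<Rightarrow> ('i\<Rightarrow>nat\<Rightarrow>real) \<Rightarrow> ('i\<Rightarrow>nat\<Rightarrow>real) \<Rightarrow> real" where
  "dcost n1 n2 n3 I a b c = (\<Sum>i\<in>I. vnorm n1 (a i) * vnorm n2 (b i) * vnorm n3 (c i))"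

lemma dcost_nonneg: "dcost n1 n2 n3 I a b c \<ge> 0"
  unfolding dcost_def by (intro sum_nonneg mult_nonneg_nonneg vnorm_nonneg)




lemma cara:
  fixes I :: "'i set"
  assumes "finite I" "dcmp n1 n2 n3 A I a b c"
  shows "\<exists>(J::'i set) a' b' c'. finite J \<and> card J \<le> n1*n2*n3 + 1 \<and> dcmp n1 n2 n3 A J a' b' c' \<and>
            dcost n1 n2 n3 J a' b' c' \<le> dcost n1 n2 n3 I a b c"
  using assms
proof (induction "card I" arbitrary: I a b c rule: less_induct)
  case less
  define W where "W i = vnorm n1 (a i) * vnorm n2 (b i) * vnorm n3 (c i)" for i
  have Wnn: "W i \<ge> 0" for i unfolding W_def by (intro mult_nonneg_nonneg vnorm_nonneg)
  show ?case
  proof (cases "card I \<le> n1*n2*n3 + 1")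
    case True show ?thesis
      apply (rule exI[of _ I], rule exI[of _ a], rule exI[of _ b], rule exI[of _ c])
      using True less.prems by simp
  next
    case big: False
    show ?thesis
    proof (cases "\<exists>i0\<in>I. W i0 = 0")
      case True
      then obtain i0 where i0: "i0 \<in> I" "W i0 = 0" by auto
      have t0: "a i0 p * b i0 q * c i0 s = 0" if "p < n1" "q < n2" "s < n3" for p q s
        using i0(2) that vnorm_eq0[of n1 "a i0"] vnorm_eq0[of n2 "b i0"] vnorm_eq0[of n3 "c i0"]
        unfolding W_def by auto
      have d: "dcmp n1 n2 n3 A (I - {i0}) a b c"
        using less.prems t0 i0 unfolding dcmp_def by (simp add: sum.remove)
      have co: "dcost n1 n2 n3 (I - {i0}) a b c = dcost n1 n2 n3 I a b c"
        using less.prems i0 unfolding dcost_def W_def by (simp add: sum.remove)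
      have "card (I - {i0}) < card I" using less.prems i0 by (meson card_Diff1_less)
      from less.hyps[OF this finite_Diff[OF less.prems(1)] d] obtain J :: "'i set" and a2 b2 c2 where
        J: "finite J" "card J \<le> n1*n2*n3 + 1" "dcmp n1 n2 n3 A J a2 b2 c2"
           "dcost n1 n2 n3 J a2 b2 c2 \<le> dcost n1 n2 n3 (I - {i0}) a b c" by blast
      show ?thesis
        apply (rule exI[of _ J], rule exI[of _ a2], rule exI[of _ b2], rule exI[of _ c2])
        using J co by simp
    next
      case False
      hence Wpos: "\<And>i. i \<in> I \<Longrightarrow> W i > 0" using Wnn by (metis less_eq_real_def)
      define Ks :: "(nat \<times> nat \<times> nat) option set"
        where "Ks = insert None (Some ` ({..<n1} \<times> {..<n2} \<times> {..<n3}))"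
      have cK: "card Ks = n1*n2*n3 + 1"
        unfolding Ks_def by (simp add: card_image card_cartesian_product)
      define v where "v i k = (case k of None \<Rightarrow> 1 | Some (p,q,s) \<Rightarrow> a i p * b i q * c i s / W i)" for i k
      have "finite Ks" unfolding Ks_def by simp
      have cKI: "card Ks < card I" using cK big by simp
      obtain g where
        g: "\<forall>k\<in>Ks. (\<Sum>i\<in>I. g i * v i k) = 0" "\<exists>i\<in>I. g i \<noteq> 0"
        using dep[OF \<open>finite Ks\<close> less.prems(1) cKI, of v] by blast
      have "None \<in> Ks" unfolding Ks_def by simp
      from g(1)[rule_format, OF this] have gsum: "(\<Sum>i\<in>I. g i) = 0" unfolding v_def by simp
      have gt: "(\<Sum>i\<in>I. g i * (a i p * b i q * c i s / W i)) = 0" if "p < n1" "q < n2" "s < n3" for p q s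
      proof -
        have "Some (p,q,s) \<in> Ks" unfolding Ks_def using that by simp
        from g(1)[rule_format, OF this] show ?thesis unfolding v_def by simp
      qed
      have "\<exists>i\<in>I. g i > 0"
      proof (rule ccontr)
        assume "\<not> ?thesis"
        hence nn: "\<forall>i\<in>I. - g i \<ge> 0" by auto
        have "(\<Sum>i\<in>I. - g i) = 0" using gsum by (simp add: sum_negf)
        hence "\<forall>i\<in>I. - g i = 0" using sum_nonneg_eq_0_iff[OF less.prems(1), of "\<lambda>i. - g i"] nn by simp
        thus False using g(2) by auto
      qed
      define Pos where "Pos = {i\<in>I. g i > 0}"
      define f where "f i = W i / g i" for i
      have Pfin: "finite (f ` Pos)" "f ` Pos \<noteq> {}" unfolding Pos_def using less.prems(1) \<open>\<exists>i\<in>I. g i > 0\<close> by auto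
      obtain j where j: "j \<in> Pos" "f j = Min (f ` Pos)" using Min_in[OF Pfin] by auto
      have jmin: "f j \<le> f i" if "i \<in> Pos" for i using j(2) Min_le[OF Pfin(1)] that by auto
      have jI: "j \<in> I" "g j > 0" using j(1) unfolding Pos_def by auto
      define lam where "lam = f j"
      have lampos: "lam > 0" unfolding lam_def f_def using jI Wpos by simp
      define sc where "sc i = 1 - lam * g i / W i" for i
      have scnn: "sc i \<ge> 0" if "i \<in> I" for i
      proof (cases "g i > 0")
        case True
        hence "lam \<le> W i / g i" using jmin[of i] that unfolding Pos_def lam_def f_def by auto
        hence "lam * g i \<le> W i" using True by (simp add: field_simps)
        thus ?thesis unfolding sc_def using Wpos[OF that] by (simp add: field_simps)
      next
        case False
        hence "lam * g i / W i \<le> 0" using lampos Wpos[OF that]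
          by (intro divide_nonpos_pos mult_nonneg_nonpos) auto
        thus ?thesis unfolding sc_def by simp
      qed
      have scj: "sc j = 0" unfolding sc_def lam_def f_def using jI Wpos[of j] by simp
      define a' where "a' i = (\<lambda>p. sc i * a i p)" for i
      have d: "dcmp n1 n2 n3 A (I - {j}) a' b c"
        unfolding dcmp_def
      proof (intro allI impI)
        fix p q s assume pqs: "p < n1" "q < n2" "s < n3"
        have "(\<Sum>i\<in>I. a' i p * b i q * c i s) = a' j p * b j q * c j s + (\<Sum>i\<in>I - {j}. a' i p * b i q * c i s)"
          using less.prems(1) jI(1) by (rule sum.remove)
        also have "a' j p * b j q * c j s = 0" unfolding a'_def using scj by simp
        finally have e1: "(\<Sum>i\<in>I - {j}. a' i p * b i q * c i s) = (\<Sum>i\<in>I. a' i p * b i q * c i s)" by simp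
        have e2: "a' i p * b i q * c i s = a i p * b i q * c i s - lam * (g i * (a i p * b i q * c i s / W i))" for i
          unfolding a'_def sc_def by (simp add: algebra_simps)
        have "(\<Sum>i\<in>I. a' i p * b i q * c i s) = (\<Sum>i\<in>I. a i p * b i q * c i s) - lam * (\<Sum>i\<in>I. g i * (a i p * b i q * c i s / W i))"
          unfolding e2 by (simp add: sum_subtractf sum_distrib_left)
        also have "\<dots> = A p q s"
          using less.prems(2) pqs gt[OF pqs] unfolding dcmp_def by simp
        finally show "A p q s = (\<Sum>i\<in>I - {j}. a' i p * b i q * c i s)" using e1 by simp
      qed
      have co: "dcost n1 n2 n3 (I - {j}) a' b c = dcost n1 n2 n3 I a b c"
      proof -
        have e3: "vnorm n1 (a' i) * vnorm n2 (b i) * vnorm n3 (c i) = sc i * W i" if "i \<in> I" for i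
          unfolding a'_def vnorm_scale W_def using scnn[OF that] by simp
        have s1: "dcost n1 n2 n3 (I - {j}) a' b c = (\<Sum>i\<in>I - {j}. sc i * W i)"
          unfolding dcost_def by (intro sum.cong refl e3) simp
        have s2: "(\<Sum>i\<in>I. sc i * W i) = sc j * W j + (\<Sum>i\<in>I - {j}. sc i * W i)"
          using less.prems(1) jI(1) by (rule sum.remove)
        have s3: "(\<Sum>i\<in>I. sc i * W i) = (\<Sum>i\<in>I. W i - lam * g i)"
        proof (intro sum.cong refl)
          fix i assume "i \<in> I"
          hence "W i \<noteq> 0" using Wpos by force
          thus "sc i * W i = W i - lam * g i" unfolding sc_def by (simp add: field_simps)
        qed
        have s4: "(\<Sum>i\<in>I. W i - lam * g i) = (\<Sum>i\<in>I. W i)"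
          using gsum by (simp add: sum_subtractf sum_distrib_left[symmetric])
        have s5: "dcost n1 n2 n3 I a b c = (\<Sum>i\<in>I. W i)" unfolding dcost_def W_def ..
        show ?thesis using s1 s2 s3 s4 s5 scj by simp
      qed
      have "card (I - {j}) < card I" using less.prems jI by (meson card_Diff1_less)
      from less.hyps[OF this finite_Diff[OF less.prems(1)] d] obtain J :: "'i set" and a2 b2 c2 where
        J: "finite J" "card J \<le> n1*n2*n3 + 1" "dcmp n1 n2 n3 A J a2 b2 c2"
           "dcost n1 n2 n3 J a2 b2 c2 \<le> dcost n1 n2 n3 (I - {j}) a' b c" by blast
      show ?thesis
        apply (rule exI[of _ J], rule exI[of _ a2], rule exI[of _ b2], rule exI[of _ c2])
        using J co by simp
    qed
  qed
qed




lemma balance: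
  fixes J :: "'i set"
  assumes "finite J" "dcmp n1 n2 n3 A J a b c"
  shows "\<exists>a' b' c'. dcmp n1 n2 n3 A J a' b' c' \<and> dcost n1 n2 n3 J a' b' c' = dcost n1 n2 n3 J a b c \<and>
     (\<forall>i. vnorm n1 (a' i) = root 3 (vnorm n1 (a i) * vnorm n2 (b i) * vnorm n3 (c i)) \<and>
          vnorm n2 (b' i) = root 3 (vnorm n1 (a i) * vnorm n2 (b i) * vnorm n3 (c i)) \<and>
          vnorm n3 (c' i) = root 3 (vnorm n1 (a i) * vnorm n2 (b i) * vnorm n3 (c i)))"
proof -
  define W where "W i = vnorm n1 (a i) * vnorm n2 (b i) * vnorm n3 (c i)" for i
  have Wnn: "W i \<ge> 0" for i unfolding W_def by (intro mult_nonneg_nonneg vnorm_nonneg)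
  have "\<exists>t. vnorm n1 (fst t) = root 3 (W i) \<and> vnorm n2 (fst (snd t)) = root 3 (W i) \<and> vnorm n3 (snd (snd t)) = root 3 (W i) \<and>
     (\<forall>p<n1. \<forall>q<n2. \<forall>s<n3. fst t p * fst (snd t) q * snd (snd t) s = a i p * b i q * c i s)" for i
  proof -
    have r3: "root 3 (W i) * root 3 (W i) * root 3 (W i) = W i"
      using real_root_pow_pos2[of 3 "W i"] Wnn[of i] by (simp add: power3_eq_cube)
    have "\<exists>x' y' z'. vnorm n1 x' = root 3 (W i) \<and> vnorm n2 y' = root 3 (W i) \<and> vnorm n3 z' = root 3 (W i) \<and>
     (\<forall>p<n1. \<forall>q<n2. \<forall>s<n3. x' p * y' q * z' s = a i p * b i q * c i s)"
      by (rule rescale) (use Wnn[of i] r3 in \<open>auto simp: W_def\<close>)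
    then obtain x' y' z' where "vnorm n1 x' = root 3 (W i) \<and> vnorm n2 y' = root 3 (W i) \<and> vnorm n3 z' = root 3 (W i) \<and>
     (\<forall>p<n1. \<forall>q<n2. \<forall>s<n3. x' p * y' q * z' s = a i p * b i q * c i s)" by blast
    thus ?thesis by (intro exI[of _ "(x', y', z')"]) simp
  qed
  then obtain f where f: "\<And>i. vnorm n1 (fst (f i)) = root 3 (W i) \<and> vnorm n2 (fst (snd (f i))) = root 3 (W i) \<and> vnorm n3 (snd (snd (f i))) = root 3 (W i) \<and>
     (\<forall>p<n1. \<forall>q<n2. \<forall>s<n3. fst (f i) p * fst (snd (f i)) q * snd (snd (f i)) s = a i p * b i q * c i s)"
    by metis
  define a' where "a' i = fst (f i)" for i
  define b' where "b' i = fst (snd (f i))" for i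
  define c' where "c' i = snd (snd (f i))" for i
  have "dcmp n1 n2 n3 A J a' b' c'" using assms(2) f unfolding dcmp_def a'_def b'_def c'_def by simp
  moreover have "dcost n1 n2 n3 J a' b' c' = dcost n1 n2 n3 J a b c"
  proof -
    have "root 3 (W i) * root 3 (W i) * root 3 (W i) = W i" for i
      using real_root_pow_pos2[of 3 "W i"] Wnn[of i] by (simp add: power3_eq_cube)
    thus ?thesis unfolding dcost_def using f unfolding a'_def b'_def c'_def W_def by simp
  qed
  ultimately show ?thesis using f unfolding a'_def b'_def c'_def W_def by blast
qed

lemma reidx:
  fixes F :: "'i \<Rightarrow> real" and m M :: nat
  assumes "bij_betw h {..<m} J" "m \<le> M"
  shows "(\<Sum>k<M. (if k < m then F (h k) else 0)) = (\<Sum>i\<in>J. F i)"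
proof -
  have "(\<Sum>k<M. (if k < m then F (h k) else 0)) = (\<Sum>k<m. (if k < m then F (h k) else 0))"
    using assms(2) by (intro sum.mono_neutral_right) auto
  also have "\<dots> = (\<Sum>k<m. F (h k))" by simp
  also have "\<dots> = (\<Sum>i\<in>J. F i)" using sum.reindex_bij_betw[OF assms(1)] .
  finally show ?thesis .
qed

lemma to_box:
  fixes J :: "'i set"
  assumes "finite J" "card J \<le> M" "dcmp n1 n2 n3 A J a b c" "dcost n1 n2 n3 J a b c \<le> c0"
  shows "\<exists>a' b' c'. dcmp n1 n2 n3 A {..<M} a' b' c' \<and> dcost n1 n2 n3 {..<M} a' b' c' \<le> dcost n1 n2 n3 J a b c
     \<and> (\<forall>i p. \<bar>a' i p\<bar> \<le> root 3 c0) \<and> (\<forall>i p. \<bar>b' i p\<bar> \<le> root 3 c0) \<and> (\<forall>i p. \<bar>c' i p\<bar> \<le> root 3 c0)"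
proof -
  define W where "W i = vnorm n1 (a i) * vnorm n2 (b i) * vnorm n3 (c i)" for i
  obtain a1 b1 c1 where bal: "dcmp n1 n2 n3 A J a1 b1 c1" "dcost n1 n2 n3 J a1 b1 c1 = dcost n1 n2 n3 J a b c"
    "\<And>i. vnorm n1 (a1 i) = root 3 (W i) \<and> vnorm n2 (b1 i) = root 3 (W i) \<and> vnorm n3 (c1 i) = root 3 (W i)"
    using balance[OF assms(1,3)] unfolding W_def by blast
  have Wle: "W i \<le> c0" if "i \<in> J" for i
  proof -
    have "W i \<le> dcost n1 n2 n3 J a b c" unfolding dcost_def W_def using assms(1) that
      by (intro member_le_sum) (auto intro!: mult_nonneg_nonneg vnorm_nonneg)
    thus ?thesis using assms(4) by simp
  qed
  have c0: "c0 \<ge> 0" using assms(4) dcost_nonneg[of n1 n2 n3 J a b c] by simp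
  obtain h where h: "bij_betw h {..<card J} J" using ex_bij_betw_nat_finite[OF assms(1)] atLeast0LessThan by metis
  have hJ: "h k \<in> J" if "k < card J" for k using h that by (auto simp: bij_betw_def)
  let ?m = "card J"
  define a' where "a' k p = (if k < ?m \<and> p < n1 then a1 (h k) p else 0)" for k p
  define b' where "b' k p = (if k < ?m \<and> p < n2 then b1 (h k) p else 0)" for k p
  define c' where "c' k p = (if k < ?m \<and> p < n3 then c1 (h k) p else 0)" for k p
  have R1: "dcmp n1 n2 n3 A {..<M} a' b' c'"
    unfolding dcmp_def
  proof (intro allI impI)
    fix p q s assume pqs: "p < n1" "q < n2" "s < n3"
    have "(\<Sum>k<M. a' k p * b' k q * c' k s) = (\<Sum>k<M. if k < ?m then a1 (h k) p * b1 (h k) q * c1 (h k) s else 0)"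
      unfolding a'_def b'_def c'_def using pqs by (intro sum.cong) auto
    also have "\<dots> = (\<Sum>i\<in>J. a1 i p * b1 i q * c1 i s)" by (rule reidx[OF h assms(2)])
    finally show "A p q s = (\<Sum>k<M. a' k p * b' k q * c' k s)" using bal(1) pqs unfolding dcmp_def by simp
  qed
  have R2: "dcost n1 n2 n3 {..<M} a' b' c' = dcost n1 n2 n3 J a b c"
  proof -
    have "dcost n1 n2 n3 {..<M} a' b' c' = (\<Sum>k<M. if k < ?m then vnorm n1 (a1 (h k)) * vnorm n2 (b1 (h k)) * vnorm n3 (c1 (h k)) else 0)"
      unfolding dcost_def
    proof (intro sum.cong refl)
      fix k
      show "vnorm n1 (a' k) * vnorm n2 (b' k) * vnorm n3 (c' k) = (if k < ?m then vnorm n1 (a1 (h k)) * vnorm n2 (b1 (h k)) * vnorm n3 (c1 (h k)) else 0)"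
      proof (cases "k < ?m")
        case True
        have "vnorm n1 (a' k) = vnorm n1 (a1 (h k))" by (rule vnorm_cong) (simp add: a'_def True)
        moreover have "vnorm n2 (b' k) = vnorm n2 (b1 (h k))" by (rule vnorm_cong) (simp add: b'_def True)
        moreover have "vnorm n3 (c' k) = vnorm n3 (c1 (h k))" by (rule vnorm_cong) (simp add: c'_def True)
        ultimately show ?thesis using True by simp
      next
        case False
        hence "a' k = (\<lambda>p. 0)" unfolding a'_def by auto
        thus ?thesis using False by simp
      qed
    qed
    also have "\<dots> = dcost n1 n2 n3 J a1 b1 c1" unfolding dcost_def by (rule reidx[OF h assms(2)])
    finally show ?thesis using bal(2) by simp
  qed
  have bnd: "root 3 (W (h k)) \<le> root 3 c0" if "k < ?m" for k
    using Wle[OF hJ[OF that]] by (simp add: real_root_le_mono)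
  have r0: "root 3 c0 \<ge> 0" using c0 by simp
  have R3: "\<bar>a' k p\<bar> \<le> root 3 c0" for k p
  proof (cases "k < ?m \<and> p < n1")
    case True
    hence "\<bar>a' k p\<bar> = \<bar>a1 (h k) p\<bar>" by (simp add: a'_def)
    also have "\<dots> \<le> vnorm n1 (a1 (h k))" using True by (intro vnorm_ge_abs) simp
    also have "\<dots> = root 3 (W (h k))" using bal(3)[of "h k"] by simp
    also have "\<dots> \<le> root 3 c0" using bnd True by blast
    finally show ?thesis .
  next
    case False thus ?thesis using r0 by (auto simp: a'_def)
  qed
  have R4: "\<bar>b' k p\<bar> \<le> root 3 c0" for k p
  proof (cases "k < ?m \<and> p < n2")
    case True
    hence "\<bar>b' k p\<bar> = \<bar>b1 (h k) p\<bar>" by (simp add: b'_def)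
    also have "\<dots> \<le> vnorm n2 (b1 (h k))" using True by (intro vnorm_ge_abs) simp
    also have "\<dots> = root 3 (W (h k))" using bal(3)[of "h k"] by simp
    also have "\<dots> \<le> root 3 c0" using bnd True by blast
    finally show ?thesis .
  next
    case False thus ?thesis using r0 by (auto simp: b'_def)
  qed
  have R5: "\<bar>c' k p\<bar> \<le> root 3 c0" for k p
  proof (cases "k < ?m \<and> p < n3")
    case True
    hence "\<bar>c' k p\<bar> = \<bar>c1 (h k) p\<bar>" by (simp add: c'_def)
    also have "\<dots> \<le> vnorm n3 (c1 (h k))" using True by (intro vnorm_ge_abs) simp
    also have "\<dots> = root 3 (W (h k))" using bal(3)[of "h k"] by simp
    also have "\<dots> \<le> root 3 c0" using bnd True by blast
    finally show ?thesis .
  next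
    case False thus ?thesis using r0 by (auto simp: c'_def)
  qed
  show ?thesis using R1 R2 R3 R4 R5 by (intro exI[of _ a'] exI[of _ b'] exI[of _ c']) auto
qed




lemma compact_fun:
  assumes "\<And>i. compact (S i)"
  shows "compact (PiE UNIV S :: ('a \<Rightarrow> 'b::topological_space) set)"
proof -
  have "compactin (product_topology (\<lambda>i. euclidean) UNIV) (PiE UNIV S)"
    by (simp add: compactin_PiE assms)
  thus ?thesis by (simp add: euclidean_product_topology)
qed

lemma compact_box: "compact {a :: nat \<Rightarrow> nat \<Rightarrow> real. \<forall>i p. \<bar>a i p\<bar> \<le> B}"
proof -
  have "{a :: nat \<Rightarrow> nat \<Rightarrow> real. \<forall>i p. \<bar>a i p\<bar> \<le> B} = PiE UNIV (\<lambda>_. PiE UNIV (\<lambda>_. {-B..B}))"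
    by (auto simp: PiE_def Pi_def abs_le_iff minus_le_iff)
  moreover have "compact (PiE UNIV (\<lambda>_. PiE UNIV (\<lambda>_. {-B..B})) :: (nat \<Rightarrow> nat \<Rightarrow> real) set)"
    by (intro compact_fun compact_Icc)
  ultimately show ?thesis by simp
qed

lemma cont_coord2 [continuous_intros]:
  fixes f :: "'a::topological_space \<Rightarrow> nat \<Rightarrow> nat \<Rightarrow> real"
  assumes "continuous_on S f"
  shows "continuous_on S (\<lambda>x. f x i p)"
proof -
  have "continuous_on S (\<lambda>x. f x i)" by (rule continuous_on_product_then_coordinatewise[OF assms])
  thus ?thesis by (rule continuous_on_product_then_coordinatewise)
qed

lemma closed_imp_const: "closed {x. Q x} \<Longrightarrow> closed {x. P \<longrightarrow> Q x}"
  by (cases P) auto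

definition Gc :: "nat \<Rightarrow> nat \<Rightarrow> nat \<Rightarrow> nat \<Rightarrow> (nat\<Rightarrow>nat\<Rightarrow>real) \<times> (nat\<Rightarrow>nat\<Rightarrow>real) \<times> (nat\<Rightarrow>nat\<Rightarrow>real) \<Rightarrow> real"
  where "Gc n1 n2 n3 M x = dcost n1 n2 n3 {..<M} (fst x) (fst (snd x)) (snd (snd x))"

lemma Gc_cont: "continuous_on S (Gc n1 n2 n3 M)"
  unfolding Gc_def dcost_def vnorm_def by (intro continuous_intros)

lemma dset_closed: "closed {x :: (nat\<Rightarrow>nat\<Rightarrow>real) \<times> (nat\<Rightarrow>nat\<Rightarrow>real) \<times> (nat\<Rightarrow>nat\<Rightarrow>real).
   dcmp n1 n2 n3 A {..<M} (fst x) (fst (snd x)) (snd (snd x))}"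
  unfolding dcmp_def
  by (intro closed_Collect_all closed_imp_const closed_Collect_eq continuous_intros)

lemma Kc_compact: "compact {x :: (nat\<Rightarrow>nat\<Rightarrow>real) \<times> (nat\<Rightarrow>nat\<Rightarrow>real) \<times> (nat\<Rightarrow>nat\<Rightarrow>real).
   (\<forall>i p. \<bar>fst x i p\<bar> \<le> B) \<and> (\<forall>i p. \<bar>fst (snd x) i p\<bar> \<le> B) \<and> (\<forall>i p. \<bar>snd (snd x) i p\<bar> \<le> B) \<and>
   dcmp n1 n2 n3 A {..<M} (fst x) (fst (snd x)) (snd (snd x))}"
proof -
  let ?Bx = "{a :: nat \<Rightarrow> nat \<Rightarrow> real. \<forall>i p. \<bar>a i p\<bar> \<le> B}"
  have "compact (?Bx \<times> ?Bx \<times> ?Bx)" by (intro compact_Times compact_box)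
  hence "compact ((?Bx \<times> ?Bx \<times> ?Bx) \<inter> {x. dcmp n1 n2 n3 A {..<M} (fst x) (fst (snd x)) (snd (snd x))})"
    using dset_closed by (rule compact_Int_closed)
  moreover have "(?Bx \<times> ?Bx \<times> ?Bx) \<inter> {x. dcmp n1 n2 n3 A {..<M} (fst x) (fst (snd x)) (snd (snd x))} =
    {x. (\<forall>i p. \<bar>fst x i p\<bar> \<le> B) \<and> (\<forall>i p. \<bar>fst (snd x) i p\<bar> \<le> B) \<and> (\<forall>i p. \<bar>snd (snd x) i p\<bar> \<le> B) \<and>
   dcmp n1 n2 n3 A {..<M} (fst x) (fst (snd x)) (snd (snd x))}"
    by auto
  ultimately show ?thesis by simp
qed




lemma triv_dcmp:
  "\<exists>(a::nat\<times>nat\<times>nat\<Rightarrow>nat\<Rightarrow>real) b c. dcmp n1 n2 n3 A ({..<n1} \<times> {..<n2} \<times> {..<n3}) a b c"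
proof -
  define a where "a = (\<lambda>(p'::nat,q'::nat,s'::nat). \<lambda>p::nat. if p = p' then A p' q' s' else (0::real))"
  define b where "b = (\<lambda>(p'::nat,q'::nat,s'::nat). \<lambda>q::nat. if q = q' then 1 else (0::real))"
  define c where "c = (\<lambda>(p'::nat,q'::nat,s'::nat). \<lambda>s::nat. if s = s' then 1 else (0::real))"
  have "dcmp n1 n2 n3 A ({..<n1} \<times> {..<n2} \<times> {..<n3}) a b c"
    unfolding dcmp_def
  proof (intro allI impI)
    fix p q s assume pqs: "p < n1" "q < n2" "s < n3"
    have "(\<Sum>i\<in>{..<n1} \<times> {..<n2} \<times> {..<n3}. a i p * b i q * c i s)
        = (\<Sum>i\<in>{..<n1} \<times> {..<n2} \<times> {..<n3}. if i = (p,q,s) then A p q s else 0)"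
      by (intro sum.cong refl) (auto simp: a_def b_def c_def split: if_splits)
    also have "\<dots> = A p q s" using pqs by (subst sum.delta) auto
    finally show "A p q s = (\<Sum>i\<in>{..<n1} \<times> {..<n2} \<times> {..<n3}. a i p * b i q * c i s)" by simp
  qed
  thus ?thesis by blast
qed

lemma attain:
  "\<exists>(r::nat) a b c. dcmp n1 n2 n3 A {..<r} a b c \<and>
     (\<forall>(r'::nat) a' b' c'. dcmp n1 n2 n3 A {..<r'} a' b' c' \<longrightarrow> dcost n1 n2 n3 {..<r} a b c \<le> dcost n1 n2 n3 {..<r'} a' b' c')"
proof -
  define M where "M = n1*n2*n3 + 1"
  obtain a0 :: "nat\<times>nat\<times>nat\<Rightarrow>nat\<Rightarrow>real" and b0 c0 where d0: "dcmp n1 n2 n3 A ({..<n1} \<times> {..<n2} \<times> {..<n3}) a0 b0 c0"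
    using triv_dcmp by blast
  define C0 where "C0 = dcost n1 n2 n3 ({..<n1} \<times> {..<n2} \<times> {..<n3}) a0 b0 c0"
  define B where "B = root 3 C0"
  define Kc where "Kc = {x :: (nat\<Rightarrow>nat\<Rightarrow>real) \<times> (nat\<Rightarrow>nat\<Rightarrow>real) \<times> (nat\<Rightarrow>nat\<Rightarrow>real).
   (\<forall>i p. \<bar>fst x i p\<bar> \<le> B) \<and> (\<forall>i p. \<bar>fst (snd x) i p\<bar> \<le> B) \<and> (\<forall>i p. \<bar>snd (snd x) i p\<bar> \<le> B) \<and>
   dcmp n1 n2 n3 A {..<M} (fst x) (fst (snd x)) (snd (snd x))}"
  have box: "\<exists>y\<in>Kc. Gc n1 n2 n3 M y \<le> dcost n1 n2 n3 J a b c"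
    if "finite J" "card J \<le> M" "dcmp n1 n2 n3 A J a b c" "dcost n1 n2 n3 J a b c \<le> C0"
    for J :: "'j set" and a b c
  proof -
    from to_box[OF that] obtain a' b' c' where
      r: "dcmp n1 n2 n3 A {..<M} a' b' c'" "dcost n1 n2 n3 {..<M} a' b' c' \<le> dcost n1 n2 n3 J a b c"
         "\<forall>i p. \<bar>a' i p\<bar> \<le> root 3 C0" "\<forall>i p. \<bar>b' i p\<bar> \<le> root 3 C0" "\<forall>i p. \<bar>c' i p\<bar> \<le> root 3 C0"
      by blast
    show ?thesis
      by (rule bexI[of _ "(a', b', c')"]) (use r in \<open>auto simp: Kc_def Gc_def B_def\<close>)
  qed
  have red: "\<exists>J::'j set. \<exists>a' b' c'. finite J \<and> card J \<le> M \<and> dcmp n1 n2 n3 A J a' b' c' \<and>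
            dcost n1 n2 n3 J a' b' c' \<le> dcost n1 n2 n3 I a b c"
    if "finite I" "dcmp n1 n2 n3 A I a b c" for I :: "'j set" and a b c
    using cara[OF that] unfolding M_def by blast
  obtain J0 :: "(nat\<times>nat\<times>nat) set" and a1 b1 c1 where J0: "finite J0" "card J0 \<le> M" "dcmp n1 n2 n3 A J0 a1 b1 c1"
    "dcost n1 n2 n3 J0 a1 b1 c1 \<le> C0"
    using red[of "{..<n1} \<times> {..<n2} \<times> {..<n3}" a0 b0 c0] d0 unfolding C0_def by auto
  obtain x0 where x0: "x0 \<in> Kc" "Gc n1 n2 n3 M x0 \<le> C0"
    using box[OF J0] J0(4) by force
  have "compact Kc" unfolding Kc_def by (rule Kc_compact)
  then obtain xs where xs: "xs \<in> Kc" "\<And>y. y \<in> Kc \<Longrightarrow> Gc n1 n2 n3 M xs \<le> Gc n1 n2 n3 M y"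
    using continuous_attains_inf[OF _ _ Gc_cont, of Kc] x0(1) by blast
  have D1: "dcmp n1 n2 n3 A {..<M} (fst xs) (fst (snd xs)) (snd (snd xs))" using xs(1) unfolding Kc_def by blast
  have D2: "dcost n1 n2 n3 {..<M} (fst xs) (fst (snd xs)) (snd (snd xs)) \<le> dcost n1 n2 n3 {..<r'} a' b' c'"
    if d: "dcmp n1 n2 n3 A {..<r'} a' b' c'" for r' :: nat and a' b' c'
  proof -
    obtain J :: "nat set" and a2 b2 c2 where J: "finite J" "card J \<le> M" "dcmp n1 n2 n3 A J a2 b2 c2"
      "dcost n1 n2 n3 J a2 b2 c2 \<le> dcost n1 n2 n3 {..<r'} a' b' c'"
      using red[of "{..<r'}" a' b' c'] d by auto
    have "Gc n1 n2 n3 M xs \<le> dcost n1 n2 n3 J a2 b2 c2"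
    proof (cases "dcost n1 n2 n3 J a2 b2 c2 \<le> C0")
      case True
      then obtain y where y: "y \<in> Kc" "Gc n1 n2 n3 M y \<le> dcost n1 n2 n3 J a2 b2 c2"
        using box[OF J(1-3)] by blast
      show ?thesis using xs(2)[OF y(1)] y(2) by linarith
    next
      case False
      thus ?thesis using xs(2)[OF x0(1)] x0(2) by simp
    qed
    thus "dcost n1 n2 n3 {..<M} (fst xs) (fst (snd xs)) (snd (snd xs)) \<le> dcost n1 n2 n3 {..<r'} a' b' c'"
      using J(4) unfolding Gc_def by simp
  qed
  show ?thesis
    apply (rule exI[of _ M], rule exI[of _ "fst xs"], rule exI[of _ "fst (snd xs)"], rule exI[of _ "snd (snd xs)"])
    using D1 D2 by blast
qed




lemma dd: assumes "l < D" shows "(\<Sum>l'<D. U i l' * diag_mat r l' l) = U i l * r l"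
proof -
  have "(\<Sum>l'<D. U i l' * diag_mat r l' l) = (\<Sum>l'<D. if l' = l then U i l * r l else 0)"
    unfolding diag_mat_def by (intro sum.cong) auto
  also have "\<dots> = U i l * r l" using assms by simp
  finally show ?thesis .
qed

lemma md: "l < D \<Longrightarrow> mat_mul D U (diag_mat r) i l = U i l * r l"
  unfolding mat_mul_def by (rule dd)

lemma transp_diag: "transp_mat (diag_mat r) = diag_mat r"
  unfolding transp_mat_def diag_mat_def by (intro ext) auto

lemma fact_expand:
  "mat_mul D (mat_mul D U (diag_mat r)) (transp_mat V) i k = (\<Sum>d<D. U i d * r d * V k d)"
  unfolding mat_mul_def[of D "mat_mul D U (diag_mat r)"] transp_mat_def
  by (intro sum.cong refl) (simp add: md)

lemma fs1: "frob_sq N D (mat_mul D U (diag_mat r)) = (\<Sum>d<D. (r d)^2 * (\<Sum>i<N. (U i d)^2))"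
proof -
  have "frob_sq N D (mat_mul D U (diag_mat r)) = (\<Sum>i<N. \<Sum>d<D. (U i d)^2 * (r d)^2)"
    unfolding frob_sq_def by (intro sum.cong refl) (simp add: md power_mult_distrib)
  also have "\<dots> = (\<Sum>d<D. \<Sum>i<N. (U i d)^2 * (r d)^2)" by (rule sum.swap)
  also have "\<dots> = (\<Sum>d<D. (r d)^2 * (\<Sum>i<N. (U i d)^2))"
    by (simp add: sum_distrib_left mult.commute)
  finally show ?thesis .
qed

lemma fsU: "frob_sq N D U = (\<Sum>d<D. (\<Sum>i<N. (U i d)^2))"
  unfolding frob_sq_def by (rule sum.swap)

lemma obj_formula:
  "fact_objective N1 J N3 D U V R = 1 / (4 * sqrt (real J)) *
     (\<Sum>d<D. (vnorm N1 (\<lambda>i. U i d))^2 * (vnorm J (\<lambda>j. R j d))^2 + real J * (vnorm N3 (\<lambda>k. V k d))^2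
        + (vnorm N3 (\<lambda>k. V k d))^2 * (vnorm J (\<lambda>j. R j d))^2 + real J * (vnorm N1 (\<lambda>i. U i d))^2)"
proof -
  have S1: "(\<Sum>j<J. frob_sq N1 D (mat_mul D U (diag_mat (R j)))) = (\<Sum>d<D. (vnorm N1 (\<lambda>i. U i d))^2 * (vnorm J (\<lambda>j. R j d))^2)"
  proof -
    have "(\<Sum>j<J. frob_sq N1 D (mat_mul D U (diag_mat (R j)))) = (\<Sum>j<J. \<Sum>d<D. (R j d)^2 * (\<Sum>i<N1. (U i d)^2))"
      by (simp add: fs1)
    also have "\<dots> = (\<Sum>d<D. \<Sum>j<J. (R j d)^2 * (\<Sum>i<N1. (U i d)^2))" by (rule sum.swap)
    also have "\<dots> = (\<Sum>d<D. (vnorm N1 (\<lambda>i. U i d))^2 * (vnorm J (\<lambda>j. R j d))^2)"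
      by (simp add: vnorm_sq sum_distrib_right mult.commute)
    finally show ?thesis .
  qed
  have S3: "(\<Sum>j<J. frob_sq N3 D (mat_mul D V (transp_mat (diag_mat (R j))))) = (\<Sum>d<D. (vnorm N3 (\<lambda>k. V k d))^2 * (vnorm J (\<lambda>j. R j d))^2)"
  proof -
    have "(\<Sum>j<J. frob_sq N3 D (mat_mul D V (transp_mat (diag_mat (R j))))) = (\<Sum>j<J. \<Sum>d<D. (R j d)^2 * (\<Sum>i<N3. (V i d)^2))"
      by (simp add: fs1 transp_diag)
    also have "\<dots> = (\<Sum>d<D. \<Sum>j<J. (R j d)^2 * (\<Sum>i<N3. (V i d)^2))" by (rule sum.swap)
    also have "\<dots> = (\<Sum>d<D. (vnorm N3 (\<lambda>k. V k d))^2 * (vnorm J (\<lambda>j. R j d))^2)"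
      by (simp add: vnorm_sq sum_distrib_right mult.commute)
    finally show ?thesis .
  qed
  have S2: "(\<Sum>j<J. frob_sq N3 D V) = real J * (\<Sum>d<D. (vnorm N3 (\<lambda>k. V k d))^2)"
    by (simp add: fsU vnorm_sq)
  have S4: "(\<Sum>j<J. frob_sq N1 D U) = real J * (\<Sum>d<D. (vnorm N1 (\<lambda>i. U i d))^2)"
    by (simp add: fsU vnorm_sq)
  show ?thesis
    unfolding fact_objective_def sum.distrib S1 S2 S3 S4 by (simp add: sum_distrib_left)
qed

lemma split_id:
  fixes u r v s :: real
  shows "u^2 * r^2 + s^2 * v^2 + v^2 * r^2 + s^2 * u^2 = (u * r - s * v)^2 + (v * r - s * u)^2 + 4 * s * (u * r * v)"
  by (simp add: power2_eq_square algebra_simps)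

lemma obj_split:
  fixes u r v :: "nat \<Rightarrow> real"
  assumes "s > 0" "s^2 = J"
  shows "1 / (4 * s) * (\<Sum>d<D. (u d)^2 * (r d)^2 + J * (v d)^2 + (v d)^2 * (r d)^2 + J * (u d)^2)
     = (\<Sum>d<D. u d * r d * v d) + 1 / (4 * s) * (\<Sum>d<D. (u d * r d - s * v d)^2 + (v d * r d - s * u d)^2)"
proof -
  have "(\<Sum>d<D. (u d)^2 * (r d)^2 + J * (v d)^2 + (v d)^2 * (r d)^2 + J * (u d)^2)
      = (\<Sum>d<D. ((u d * r d - s * v d)^2 + (v d * r d - s * u d)^2) + 4 * s * (u d * r d * v d))"
    unfolding assms(2)[symmetric] by (intro sum.cong refl) (rule split_id)
  also have "\<dots> = (\<Sum>d<D. (u d * r d - s * v d)^2 + (v d * r d - s * u d)^2) + 4 * s * (\<Sum>d<D. u d * r d * v d)"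
    by (simp add: sum.distrib sum_distrib_left)
  finally show ?thesis using assms(1) by (simp add: field_simps)
qed




lemma nuc_eq: "tensor_nuclear_norm n1 n2 n3 A =
  Inf {dcost n1 n2 n3 {..<r} a b c | (r::nat) a b c. dcmp n1 n2 n3 A {..<r} a b c}"
  unfolding tensor_nuclear_norm_def dcost_def dcmp_def by simp

lemma nuc_le: fixes r :: nat assumes "dcmp n1 n2 n3 A {..<r} a b c"
  shows "tensor_nuclear_norm n1 n2 n3 A \<le> dcost n1 n2 n3 {..<r} a b c"
  unfolding nuc_eq
proof (rule cInf_lower)
  show "dcost n1 n2 n3 {..<r} a b c \<in> {dcost n1 n2 n3 {..<r} a b c | (r::nat) a b c. dcmp n1 n2 n3 A {..<r} a b c}"
    using assms by blast
  show "bdd_below {dcost n1 n2 n3 {..<r} a b c | (r::nat) a b c. dcmp n1 n2 n3 A {..<r} a b c}"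
    by (rule bdd_belowI[of _ 0]) (auto simp: dcost_nonneg)
qed

lemma nuc_attained: "\<exists>(r::nat) a b c. dcmp n1 n2 n3 A {..<r} a b c \<and> dcost n1 n2 n3 {..<r} a b c = tensor_nuclear_norm n1 n2 n3 A"
proof -
  obtain r :: nat and a b c where d: "dcmp n1 n2 n3 A {..<r} a b c" and
    m: "\<And>r' a' b' c'. dcmp n1 n2 n3 A {..<r'} a' b' c' \<Longrightarrow> dcost n1 n2 n3 {..<r} a b c \<le> dcost n1 n2 n3 {..<(r'::nat)} a' b' c'"
    using attain[of n1 n2 n3 A] by blast
  have "dcost n1 n2 n3 {..<r} a b c \<le> tensor_nuclear_norm n1 n2 n3 A"
    unfolding nuc_eq
  proof (rule cInf_greatest)
    show "{dcost n1 n2 n3 {..<r} a b c | (r::nat) a b c. dcmp n1 n2 n3 A {..<r} a b c} \<noteq> {}" using d by blast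
  qed (use m in blast)
  moreover have "tensor_nuclear_norm n1 n2 n3 A \<le> dcost n1 n2 n3 {..<r} a b c" by (rule nuc_le[OF d])
  ultimately show ?thesis using d by (intro exI[of _ r] exI[of _ a] exI[of _ b] exI[of _ c]) simp
qed

lemma nuc_nonneg: "tensor_nuclear_norm n1 n2 n3 A \<ge> 0"
  using nuc_attained[of n1 n2 n3 A] dcost_nonneg by metis

lemma fact_dcmp: "is_factorization N1 J N3 X D U V R \<Longrightarrow>
   dcmp N1 J N3 X {..<D} (\<lambda>d i. U i d) (\<lambda>d j. R j d) (\<lambda>d k. V k d)"
  unfolding is_factorization_def dcmp_def fact_expand by simp

lemma fact_cost: "dcost N1 J N3 {..<D} (\<lambda>d i. U i d) (\<lambda>d j. R j d) (\<lambda>d k. V k d) =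
   (\<Sum>d<D. vnorm N1 (\<lambda>i. U i d) * vnorm J (\<lambda>j. R j d) * vnorm N3 (\<lambda>k. V k d))"
  unfolding dcost_def by simp

lemma obj_decomp:
  assumes "J > 0"
  shows "fact_objective N1 J N3 D U V R =
     dcost N1 J N3 {..<D} (\<lambda>d i. U i d) (\<lambda>d j. R j d) (\<lambda>d k. V k d) + 1 / (4 * sqrt (real J)) *
     (\<Sum>d<D. (vnorm N1 (\<lambda>i. U i d) * vnorm J (\<lambda>j. R j d) - sqrt (real J) * vnorm N3 (\<lambda>k. V k d))^2
           + (vnorm N3 (\<lambda>k. V k d) * vnorm J (\<lambda>j. R j d) - sqrt (real J) * vnorm N1 (\<lambda>i. U i d))^2)"
  unfolding obj_formula fact_cost
  by (rule obj_split) (use assms in auto)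

lemma obj_ge: assumes "is_factorization N1 J N3 X D U V R"
  shows "dcost N1 J N3 {..<D} (\<lambda>d i. U i d) (\<lambda>d j. R j d) (\<lambda>d k. V k d) \<le> fact_objective N1 J N3 D U V R"
proof (cases "J = 0")
  case True
  thus ?thesis unfolding fact_cost fact_objective_def by simp
next
  case False
  hence "J > 0" by simp
  show ?thesis unfolding obj_decomp[OF \<open>J > 0\<close>]
    by (intro add_increasing2 mult_nonneg_nonneg sum_nonneg add_nonneg_nonneg) auto
qed




lemma part1:
  fixes N1 J N3 :: nat and X :: "nat \<Rightarrow> nat \<Rightarrow> nat \<Rightarrow> real"
  shows "\<exists>D U V R. is_factorization N1 J N3 X D U V R \<and>
            fact_objective N1 J N3 D U V R = tensor_nuclear_norm N1 J N3 X"
proof (cases "J = 0")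
  case True
  have "dcmp N1 J N3 X {..<0} (\<lambda>_ _. 0) (\<lambda>_ _. 0) (\<lambda>_ _. 0)" unfolding dcmp_def using True by simp
  from nuc_le[OF this] have "tensor_nuclear_norm N1 J N3 X \<le> 0" unfolding dcost_def by simp
  hence n0: "tensor_nuclear_norm N1 J N3 X = 0" using nuc_nonneg[of N1 J N3 X] by simp
  show ?thesis
    apply (rule exI[of _ 0], rule exI[of _ "\<lambda>_ _. 0"], rule exI[of _ "\<lambda>_ _. 0"], rule exI[of _ "\<lambda>_ _. 0"])
    using True n0 unfolding is_factorization_def fact_objective_def by simp
next
  case False
  hence Jpos: "J > 0" by simp
  define s where "s = sqrt (real J)"
  have spos: "s > 0" unfolding s_def using Jpos by simp
  obtain r :: nat and a b c where d: "dcmp N1 J N3 X {..<r} a b c"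
    and e: "dcost N1 J N3 {..<r} a b c = tensor_nuclear_norm N1 J N3 X"
    using nuc_attained[of N1 J N3 X] by blast
  define P where "P d = vnorm N1 (a d) * vnorm J (b d) * vnorm N3 (c d)" for d
  have Pnn: "P d \<ge> 0" for d unfolding P_def by (intro mult_nonneg_nonneg vnorm_nonneg)
  define tu where "tu d = (if P d = 0 then 0 else sqrt (P d / s))" for d
  define tr where "tr d = (if P d = 0 then 0 else s)" for d
  have ex: "\<exists>t. vnorm N1 (fst t) = tu d \<and> vnorm J (fst (snd t)) = tr d \<and> vnorm N3 (snd (snd t)) = tu d \<and>
     (\<forall>p<N1. \<forall>q<J. \<forall>k<N3. fst t p * fst (snd t) q * snd (snd t) k = a d p * b d q * c d k)" for d
  proof -
    have tt: "tu d * tr d * tu d = P d"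
    proof (cases "P d = 0")
      case True thus ?thesis unfolding tu_def tr_def by simp
    next
      case False
      have "sqrt (P d / s) * s * sqrt (P d / s) = (sqrt (P d / s) * sqrt (P d / s)) * s" by (simp add: algebra_simps)
      also have "\<dots> = \<bar>P d / s\<bar> * s" by (simp only: real_sqrt_mult_self)
      also have "\<dots> = P d" using Pnn[of d] spos by simp
      finally show ?thesis unfolding tu_def tr_def using False by simp
    qed
    have "\<exists>x' y' z'. vnorm N1 x' = tu d \<and> vnorm J y' = tr d \<and> vnorm N3 z' = tu d \<and>
     (\<forall>p<N1. \<forall>q<J. \<forall>k<N3. x' p * y' q * z' k = a d p * b d q * c d k)"
      by (rule rescale) (use tt spos divide_nonneg_pos[OF Pnn[of d] spos] in \<open>auto simp: tu_def tr_def P_def\<close>)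
    then obtain x' y' z' where "vnorm N1 x' = tu d \<and> vnorm J y' = tr d \<and> vnorm N3 z' = tu d \<and>
     (\<forall>p<N1. \<forall>q<J. \<forall>k<N3. x' p * y' q * z' k = a d p * b d q * c d k)" by blast
    thus ?thesis by (intro exI[of _ "(x', y', z')"]) simp
  qed
  then obtain f where f: "\<And>d. vnorm N1 (fst (f d)) = tu d \<and> vnorm J (fst (snd (f d))) = tr d \<and> vnorm N3 (snd (snd (f d))) = tu d \<and>
     (\<forall>p<N1. \<forall>q<J. \<forall>k<N3. fst (f d) p * fst (snd (f d)) q * snd (snd (f d)) k = a d p * b d q * c d k)"
    by metis
  define U where "U i d = fst (f d) i" for i d
  define R where "R j d = fst (snd (f d)) j" for j d
  define V where "V k d = snd (snd (f d)) k" for k d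
  have nU: "vnorm N1 (\<lambda>i. U i d) = tu d" for d unfolding U_def using f[of d] by simp
  have nR: "vnorm J (\<lambda>j. R j d) = tr d" for d unfolding R_def using f[of d] by simp
  have nV: "vnorm N3 (\<lambda>k. V k d) = tu d" for d unfolding V_def using f[of d] by simp
  have fac: "is_factorization N1 J N3 X r U V R"
    unfolding is_factorization_def fact_expand
  proof (intro allI impI)
    fix j i k assume "j < J" "i < N1" "k < N3"
    thus "X i j k = (\<Sum>d<r. U i d * R j d * V k d)"
      using d f unfolding dcmp_def U_def R_def V_def by simp
  qed
  have sq0: "(vnorm N1 (\<lambda>i. U i d) * vnorm J (\<lambda>j. R j d) - sqrt (real J) * vnorm N3 (\<lambda>k. V k d))^2
           + (vnorm N3 (\<lambda>k. V k d) * vnorm J (\<lambda>j. R j d) - sqrt (real J) * vnorm N1 (\<lambda>i. U i d))^2 = 0" for d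
    unfolding nU nR nV tu_def tr_def s_def[symmetric] by (simp add: mult.commute)
  have co: "dcost N1 J N3 {..<r} (\<lambda>d i. U i d) (\<lambda>d j. R j d) (\<lambda>d k. V k d) = dcost N1 J N3 {..<r} a b c"
  proof -
    have "tu d * tr d * tu d = P d" for d
    proof (cases "P d = 0")
      case True thus ?thesis unfolding tu_def tr_def by simp
    next
      case False
      have "sqrt (P d / s) * s * sqrt (P d / s) = (sqrt (P d / s) * sqrt (P d / s)) * s" by (simp add: algebra_simps)
      also have "\<dots> = \<bar>P d / s\<bar> * s" by (simp only: real_sqrt_mult_self)
      also have "\<dots> = P d" using Pnn[of d] spos by simp
      finally show ?thesis unfolding tu_def tr_def using False by simp
    qed
    thus ?thesis unfolding fact_cost using nU nR nV unfolding dcost_def P_def by simp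
  qed
  show ?thesis
    apply (rule exI[of _ r], rule exI[of _ U], rule exI[of _ V], rule exI[of _ R])
    using fac obj_decomp[OF Jpos, of N1 N3 r U V R] sq0 co e by simp
qed

lemma part2:
  assumes f: "is_factorization N1 J N3 X D U V R"
  shows "tensor_nuclear_norm N1 J N3 X \<le> fact_objective N1 J N3 D U V R"
    using nuc_le[OF fact_dcmp[OF f]] obj_ge[OF f] by linarith

lemma part3:
  assumes h: "is_factorization N1 J N3 X D U V R \<and>
            fact_objective N1 J N3 D U V R = tensor_nuclear_norm N1 J N3 X" and dD: "d < D"
  shows "vnorm N1 (\<lambda>i. U i d) * vnorm J (\<lambda>j. R j d) = sqrt (real J) * vnorm N3 (\<lambda>k. V k d) \<and>
        vnorm N3 (\<lambda>k. V k d) * vnorm J (\<lambda>j. R j d) = sqrt (real J) * vnorm N1 (\<lambda>i. U i d)"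
proof -
  define Q where "Q d = (vnorm N1 (\<lambda>i. U i d) * vnorm J (\<lambda>j. R j d) - sqrt (real J) * vnorm N3 (\<lambda>k. V k d))^2
           + (vnorm N3 (\<lambda>k. V k d) * vnorm J (\<lambda>j. R j d) - sqrt (real J) * vnorm N1 (\<lambda>i. U i d))^2" for d
  show ?thesis
  proof (cases "J = 0")
    case True thus ?thesis by simp
  next
    case False
    hence Jpos: "J > 0" by simp
    have f: "is_factorization N1 J N3 X D U V R" using h by simp
    have Qnn: "Q d' \<ge> 0" for d' unfolding Q_def by simp
    have "tensor_nuclear_norm N1 J N3 X \<le> dcost N1 J N3 {..<D} (\<lambda>d i. U i d) (\<lambda>d j. R j d) (\<lambda>d k. V k d)"
      using nuc_le[OF fact_dcmp[OF f]] .
    hence "1 / (4 * sqrt (real J)) * (\<Sum>d<D. Q d) \<le> 0"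
      using obj_decomp[OF Jpos, of N1 N3 D U V R] h unfolding Q_def by linarith
    moreover have "4 * sqrt (real J) > 0" using Jpos by simp
    ultimately have "(\<Sum>d<D. Q d) \<le> 0" by (simp add: divide_le_0_iff)
    hence "(\<Sum>d<D. Q d) = 0" using sum_nonneg[of "{..<D}" Q] Qnn by (meson antisym)
    hence "Q d = 0" using sum_nonneg_eq_0_iff[of "{..<D}" Q] Qnn dD by simp
    hence "(vnorm N1 (\<lambda>i. U i d) * vnorm J (\<lambda>j. R j d) - sqrt (real J) * vnorm N3 (\<lambda>k. V k d))^2 = 0 \<and>
           (vnorm N3 (\<lambda>k. V k d) * vnorm J (\<lambda>j. R j d) - sqrt (real J) * vnorm N1 (\<lambda>i. U i d))^2 = 0"
      unfolding Q_def by (simp add: add_nonneg_eq_0_iff)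
    thus ?thesis by simp
  qed
qed

theorem theorem1:
  fixes N1 J N3 :: nat and X :: "nat \<Rightarrow> nat \<Rightarrow> nat \<Rightarrow> real"
  shows "(\<exists>D U V R. is_factorization N1 J N3 X D U V R \<and>
            fact_objective N1 J N3 D U V R = tensor_nuclear_norm N1 J N3 X)
       \<and> (\<forall>D U V R. is_factorization N1 J N3 X D U V R \<longrightarrow>
            tensor_nuclear_norm N1 J N3 X \<le> fact_objective N1 J N3 D U V R)
       \<and> (\<forall>D U V R. is_factorization N1 J N3 X D U V R \<and>
            fact_objective N1 J N3 D U V R = tensor_nuclear_norm N1 J N3 X \<longrightarrow>
            (\<forall>d<D.
               vnorm N1 (\<lambda>i. U i d) * vnorm J (\<lambda>j. R j d) = sqrt (real J) * vnorm N3 (\<lambda>k. V k d) \<and>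
               vnorm N3 (\<lambda>k. V k d) * vnorm J (\<lambda>j. R j d) = sqrt (real J) * vnorm N1 (\<lambda>i. U i d)))"
  using part1[of N1 J N3 X] part2[of N1 J N3 X] part3[of N1 J N3 X] by blast


end
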